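(* Let $n\ge 1$ and $Dic_{4n}=\langle a,x\mid a^{2n}=1,\ x^2=a^n,\ x^{-1}ax=a^{-1}\rangle$ be the dicyclic group of order $4n$. Then: \begin{enumerate} \item If $n\neq 2$, then $\mathcal{CD}(Dic_{4n})$ is a chain of length $0$; namely $\mathcal{CD}(Dic_{4n})=\{Dic_{4n}\}$ for $n=1$, and $\mathcal{CD}(Dic_{4n})=\{\langle a\rangle\}$ for $n\ge 3$. \item If $n=2$, then $\mathcal{CD}(Dic_{4n})$ is a quasi-antichain of width $3$, namely the set of all subgroups $H$ with $Z(Dic_{4n})\le H\le Dic_{4n}$. \end{enumerate}
   Context: For a finite group $G$ and $H\le G$, $m_G(H)=|H|\,|C_G(H)|$, $m^*(G)=\max\{m_G(H)\mid H\le G\}$, and the Chermak-Delgado lattice is $\mathcal{CD}(G)=\{H\le G\mid m_G(H)=m^*(G)\}$. A chain of length $0$ is a one-element lattice. A lattice is a quasi-antichain of width $w$ if it consists of a least element, a greatest element, and $w$ further pairwise incomparable elements. *)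

theory Defs
  imports "HOL-Algebra.Algebra"
begin

definition centralizer :: "('a, 'b) monoid_scheme \<Rightarrow> 'a set \<Rightarrow> 'a set" where
  "centralizer G H = {g \<in> carrier G. \<forall>h\<in>H. g \<otimes>\<^bsub>G\<^esub> h = h \<otimes>\<^bsub>G\<^esub> g}"

definition group_center :: "('a, 'b) monoid_scheme \<Rightarrow> 'a set" where
  "group_center G = centralizer G (carrier G)"

definition cd_measure :: "('a, 'b) monoid_scheme \<Rightarrow> 'a set \<Rightarrow> nat" where
  "cd_measure G H = card H * card (centralizer G H)"

definition cd_max :: "('a, 'b) monoid_scheme \<Rightarrow> nat" where
  "cd_max G = Max {cd_measure G H | H. subgroup H G}"

definition CD_lattice :: "('a, 'b) monoid_scheme \<Rightarrow> 'a set set" where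
  "CD_lattice G = {H. subgroup H G \<and> cd_measure G H = cd_max G}"

definition chain_length_zero :: "'a set set \<Rightarrow> bool" where
  "chain_length_zero L \<longleftrightarrow> card L = 1"

definition quasi_antichain :: "'a set set \<Rightarrow> nat \<Rightarrow> bool" where
  "quasi_antichain LL w \<longleftrightarrow>
     (\<exists>bt tp mids. LL = {bt, tp} \<union> mids \<and> bt \<noteq> tp \<and> bt \<notin> mids \<and> tp \<notin> mids
        \<and> finite mids \<and> card mids = w
        \<and> (\<forall>S\<in>LL. bt \<subseteq> S \<and> S \<subseteq> tp)
        \<and> (\<forall>S\<in>mids. \<forall>T\<in>mids. S \<subseteq> T \<longrightarrow> S = T))"

end

theory Submission
  imports Defs
begin

locale dic = group G for G (structure) +
  fixes a x :: 'a and n :: nat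
  assumes n1: "n \<ge> 1"
    and a: "a \<in> carrier G" and x: "x \<in> carrier G"
    and gen: "generate G {a, x} = carrier G"
    and an: "a [^] (2 * n) = \<one>"
    and x2: "x [^] (2::nat) = a [^] n"
    and rel: "inv x \<otimes> a \<otimes> x = inv a"
    and fin: "finite (carrier G)" and crd: "card (carrier G) = 4 * n"
begin

definition P :: "int \<Rightarrow> 'a" where "P i = a [^] i"
definition Q :: "int \<Rightarrow> 'a" where "Q i = a [^] i \<otimes> x"

lemma P_c[simp]: "P i \<in> carrier G" unfolding P_def using a by simp
lemma Q_c[simp]: "Q i \<in> carrier G" unfolding Q_def using a x by simp

lemma xinv: "w \<in> carrier G \<Longrightarrow> x \<otimes> (inv x \<otimes> w) = w"
  using x by (simp add: m_assoc[symmetric])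

lemma conj_hom: "(\<lambda>g. inv x \<otimes> g \<otimes> x) \<in> hom G G"
  unfolding hom_def using x by (auto simp: m_assoc xinv)

lemma ax: "a [^] (k::int) \<otimes> x = x \<otimes> a [^] (-k)"
proof -
  have "inv x \<otimes> a [^] k \<otimes> x = (inv x \<otimes> a \<otimes> x) [^] k"
    using hom_int_pow[OF conj_hom a is_group is_group] by simp
  also have "\<dots> = a [^] (-k)" using rel a by (simp add: int_pow_inv int_pow_neg)
  finally have "x \<otimes> (inv x \<otimes> a [^] k \<otimes> x) = x \<otimes> a [^] (-k)" by simp
  thus ?thesis using a x by (simp add: m_assoc[symmetric])
qed

lemma xx: "x \<otimes> x = P (int n)"
  using x2 x a unfolding P_def by (simp add: int_pow_int numeral_2_eq_2)

lemma PP: "P i \<otimes> P j = P (i + j)" unfolding P_def using a by (simp add: int_pow_mult)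
lemma PQ: "P i \<otimes> Q j = Q (i + j)" unfolding P_def Q_def using a x by (simp add: int_pow_mult m_assoc)
lemma QP: "Q i \<otimes> P j = Q (i - j)"
proof -
  have "x \<otimes> a [^] j = a [^] (-j) \<otimes> x" using ax[of "-j"] by simp
  hence "Q i \<otimes> P j = a [^] i \<otimes> (a [^] (-j) \<otimes> x)" unfolding P_def Q_def using a x
    by (simp add: m_assoc)
  also have "\<dots> = a [^] (i + -j) \<otimes> x" by (simp only: int_pow_mult[OF a] m_assoc int_pow_closed a x)
  finally show ?thesis unfolding Q_def by simp
qed
lemma QQ: "Q i \<otimes> Q j = P (i - j + int n)"
proof -
  have "Q i \<otimes> Q j = (Q i \<otimes> P j) \<otimes> x" unfolding Q_def P_def using a x by (simp add: m_assoc)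
  also have "\<dots> = Q (i - j) \<otimes> x" by (simp add: QP)
  also have "\<dots> = a [^] (i - j) \<otimes> (x \<otimes> x)" by (simp add: Q_def m_assoc a x)
  also have "\<dots> = P (i - j + int n)" by (simp add: xx P_def int_pow_mult a)
  finally show ?thesis .
qed

lemma P0: "P 0 = \<one>" unfolding P_def by simp

lemma P_mod: "P i = P (i mod (2 * int n))"
proof -
  have e: "a [^] (2 * int n) = \<one>" using an a by (metis int_pow_int of_nat_mult of_nat_numeral)
  have "P i = a [^] ((2 * int n) * (i div (2 * int n)) + i mod (2 * int n))" unfolding P_def by simp
  also have "\<dots> = a [^] ((2 * int n) * (i div (2 * int n))) \<otimes> a [^] (i mod (2 * int n))"
    by (rule int_pow_mult[OF a])
  also have "\<dots> = (a [^] (2 * int n)) [^] (i div (2 * int n)) \<otimes> a [^] (i mod (2 * int n))"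
    by (simp only: int_pow_pow[OF a])
  also have "\<dots> = P (i mod (2 * int n))" unfolding P_def
    using a e by simp
  finally show ?thesis .
qed
lemma Q_mod: "Q i = Q (i mod (2 * int n))" unfolding Q_def using P_mod unfolding P_def by metis

lemma P2n: "P (2 * int n) = \<one>" using P_mod[of "2 * int n"] by (simp add: P0)

lemma P_inv: "inv (P i) = P (- i)"
  by (rule inv_equality) (simp_all add: PP P0)
lemma Q_inv: "inv (Q i) = Q (i + int n)"
  by (rule inv_equality) (simp_all add: QQ P0 P2n[simplified])

definition S where "S = range P \<union> range Q"

lemma S_sub: "subgroup S G"
proof (rule subgroupI)
  show "S \<subseteq> carrier G" unfolding S_def by auto
  show "S \<noteq> {}" unfolding S_def by auto
  show "inv h \<in> S" if "h \<in> S" for h using that unfolding S_def by (auto simp: P_inv Q_inv)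
  show "h \<otimes> k \<in> S" if "h \<in> S" "k \<in> S" for h k using that unfolding S_def
    by (auto simp: PP PQ QP QQ)
qed

lemma carrier_S: "carrier G = S"
proof
  have "a = P 1" "x = Q 0" unfolding P_def Q_def using a x by simp_all
  hence "{a, x} \<subseteq> S" unfolding S_def by auto
  hence "generate G {a, x} \<subseteq> S" by (rule generate_subgroup_incl[OF _ S_sub])
  thus "carrier G \<subseteq> S" using gen by simp
  show "S \<subseteq> carrier G" unfolding S_def by auto
qed

definition F :: "int \<times> nat \<Rightarrow> 'a" where "F p = (if snd p = 0 then P (fst p) else Q (fst p))"

lemma F_img: "F ` ({0..<2 * int n} \<times> {0, 1}) = carrier G"
proof
  show "F ` ({0..<2 * int n} \<times> {0, 1}) \<subseteq> carrier G" unfolding F_def by auto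
  show "carrier G \<subseteq> F ` ({0..<2 * int n} \<times> {0, 1})"
  proof
    fix g assume "g \<in> carrier G"
    then obtain i where "g = P i \<or> g = Q i" unfolding carrier_S S_def by auto
    moreover have "i mod (2 * int n) \<in> {0..<2 * int n}" using n1 by simp
    ultimately show "g \<in> F ` ({0..<2 * int n} \<times> {0, 1})"
      using P_mod Q_mod unfolding F_def
      by (auto intro: image_eqI[where x="(i mod (2 * int n), 0)"] image_eqI[where x="(i mod (2 * int n), 1)"])
  qed
qed

lemma F_inj: "inj_on F ({0..<2 * int n} \<times> {0, 1})"
proof -
  have "card ({0..<2 * int n} \<times> {0::nat, 1}) = 4 * n" by (simp add: card_cartesian_product)
  thus ?thesis using F_img crd by (simp add: inj_on_iff_eq_card)
qed

lemma P_eq: "P i = P j \<longleftrightarrow> i mod (2 * int n) = j mod (2 * int n)"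
proof
  assume "P i = P j"
  hence "F (i mod (2 * int n), 0) = F (j mod (2 * int n), 0)" unfolding F_def using P_mod by simp
  thus "i mod (2 * int n) = j mod (2 * int n)" using inj_onD[OF F_inj] n1 by auto
qed (metis P_mod)

lemma Q_eq: "Q i = Q j \<longleftrightarrow> i mod (2 * int n) = j mod (2 * int n)"
proof
  assume "Q i = Q j"
  hence "F (i mod (2 * int n), 1) = F (j mod (2 * int n), 1)" unfolding F_def using Q_mod by simp
  thus "i mod (2 * int n) = j mod (2 * int n)" using inj_onD[OF F_inj] n1 by auto
qed (metis Q_mod)

lemma PQ_neq[simp]: "P i \<noteq> Q j"
proof
  assume "P i = Q j"
  hence "F (i mod (2 * int n), 0) = F (j mod (2 * int n), 1)" unfolding F_def using P_mod Q_mod by simp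
  thus False using inj_onD[OF F_inj] n1 by fastforce
qed
lemma QP_neq[simp]: "Q i \<noteq> P j" using PQ_neq by metis

lemma P_eq_dvd: "P i = P j \<longleftrightarrow> (2 * int n) dvd (i - j)"
  by (simp add: P_eq mod_eq_dvd_iff)
lemma Q_eq_dvd: "Q i = Q j \<longleftrightarrow> (2 * int n) dvd (i - j)"
  by (simp add: Q_eq mod_eq_dvd_iff)

lemma comm_PQ: "P i \<otimes> Q j = Q j \<otimes> P i \<longleftrightarrow> int n dvd i"
proof -
  have "P i \<otimes> Q j = Q j \<otimes> P i \<longleftrightarrow> (2 * int n) dvd (2 * i)"
    by (simp add: PQ QP Q_eq_dvd)
  also have "\<dots> \<longleftrightarrow> int n dvd i" by simp
  finally show ?thesis .
qed
lemma comm_QQ: "Q i \<otimes> Q j = Q j \<otimes> Q i \<longleftrightarrow> int n dvd (i - j)"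
proof -
  have "Q i \<otimes> Q j = Q j \<otimes> Q i \<longleftrightarrow> (2 * int n) dvd (2 * (i - j))"
  proof -
    have e: "(i - j + int n) - (j - i + int n) = 2 * (i - j)" by simp
    show ?thesis by (simp only: QQ P_eq_dvd e)
  qed
  also have "\<dots> \<longleftrightarrow> int n dvd (i - j)" by (rule dvd_times_left_cancel_iff) simp
  finally show ?thesis .
qed
lemma comm_PP: "P i \<otimes> P j = P j \<otimes> P i" by (simp add: PP add.commute)


lemma carrier_cases: "g \<in> carrier G \<Longrightarrow> (\<And>i. g = P i \<Longrightarrow> R) \<Longrightarrow> (\<And>i. g = Q i \<Longrightarrow> R) \<Longrightarrow> R"
  unfolding carrier_S S_def by auto

lemma A_gen: "generate G {a} = range P"
  unfolding generate_pow[OF a] P_def by auto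

lemma A_sub: "subgroup (range P) G"
  using generate_is_subgroup[of "{a}"] a A_gen by auto

lemma card_A: "card (range P) = 2 * n"
proof -
  have "range P = P ` {0..<2 * int n}"
  proof
    show "range P \<subseteq> P ` {0..<2 * int n}"
    proof
      fix g assume "g \<in> range P"
      then obtain i where "g = P i" by auto
      hence "g = P (i mod (2 * int n))" using P_mod by simp
      moreover have "i mod (2 * int n) \<in> {0..<2 * int n}" using n1 by simp
      ultimately show "g \<in> P ` {0..<2 * int n}" by blast
    qed
  qed auto
  moreover have "inj_on P {0..<2 * int n}"
    by (rule inj_onI) (simp add: P_eq)
  ultimately show ?thesis by (simp add: card_image)
qed

lemma P_Z: assumes "int n dvd k" shows "P k \<in> {P 0, P (int n)}"
proof -
  obtain t where t: "k = int n * t" using assms by auto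
  show ?thesis
  proof (cases "even t")
    case True
    then obtain s where "t = 2 * s" by auto
    hence "(2 * int n) dvd (k - 0)" using t by simp
    thus ?thesis by (simp add: P_eq_dvd)
  next
    case False
    then obtain s where "t = 2 * s + 1" using oddE by blast
    hence "k - int n = (2 * int n) * s" using t by (simp add: algebra_simps)
    hence "(2 * int n) dvd (k - int n)" by simp
    thus ?thesis by (simp add: P_eq_dvd)
  qed
qed

lemma Q_pair: assumes "int n dvd (k - j)" shows "Q k \<in> {Q j, Q (j + int n)}"
proof -
  obtain t where t: "k - j = int n * t" using assms by auto
  show ?thesis
  proof (cases "even t")
    case True
    then obtain s where "t = 2 * s" by auto
    hence "(2 * int n) dvd (k - j)" using t by simp
    thus ?thesis by (simp add: Q_eq_dvd)
  next
    case False
    then obtain s where "t = 2 * s + 1" using oddE by blast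
    hence "k - (j + int n) = (2 * int n) * s" using t by (simp add: algebra_simps)
    hence "(2 * int n) dvd (k - (j + int n))" by (metis dvd_triv_left)
    thus ?thesis by (simp add: Q_eq_dvd)
  qed
qed

lemma Z_dvd: assumes "P k \<in> {P 0, P (int n)}" shows "int n dvd k"
proof -
  have "(2 * int n) dvd k \<or> (2 * int n) dvd (k - int n)" using assms by (auto simp: P_eq_dvd)
  thus ?thesis
    by (metis dvd_diff_commute dvd_mult_right dvd_diff dvd_refl diff_add_cancel dvd_add)
qed

lemma cent_sub: "centralizer G H \<subseteq> carrier G" unfolding centralizer_def by auto

lemma L1: assumes "P i \<in> H" "\<not> int n dvd i" shows "centralizer G H \<subseteq> range P"
proof
  fix g assume g: "g \<in> centralizer G H"
  hence gc: "g \<in> carrier G" and c: "g \<otimes> P i = P i \<otimes> g" using assms unfolding centralizer_def by auto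
  show "g \<in> range P"
  proof (rule carrier_cases[OF gc])
    fix k assume "g = Q k" thus ?thesis using c comm_PQ assms(2) by metis
  qed auto
qed

lemma L2: assumes "P i \<in> H" "\<not> int n dvd i" "Q j \<in> H" shows "centralizer G H \<subseteq> {P 0, P (int n)}"
proof
  fix g assume g: "g \<in> centralizer G H"
  hence gc: "g \<in> carrier G" and c: "g \<otimes> P i = P i \<otimes> g" and d: "g \<otimes> Q j = Q j \<otimes> g"
    using assms unfolding centralizer_def by auto
  show "g \<in> {P 0, P (int n)}"
  proof (rule carrier_cases[OF gc])
    fix k assume "g = Q k" thus ?thesis using c comm_PQ assms(2) by metis
  next
    fix k assume gk: "g = P k"
    hence "int n dvd k" using d comm_PQ by metis
    thus ?thesis using P_Z gk by simp
  qed
qed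

lemma L3H: assumes H: "subgroup H G" and "Q j \<in> H" and Z: "\<And>k. P k \<in> H \<Longrightarrow> int n dvd k"
  shows "H \<subseteq> {P 0, P (int n), Q j, Q (j + int n)}"
proof
  fix g assume gH: "g \<in> H"
  hence gc: "g \<in> carrier G" using subgroup.subset[OF H] by auto
  show "g \<in> {P 0, P (int n), Q j, Q (j + int n)}"
  proof (rule carrier_cases[OF gc])
    fix k assume "g = P k" thus ?thesis using Z gH P_Z by auto
  next
    fix k assume gk: "g = Q k"
    have "Q k \<otimes> inv (Q j) \<in> H" using gH gk assms(2) H by (simp add: subgroup.m_closed subgroup.m_inv_closed)
    hence "P (k - j) \<in> H" by (simp add: Q_inv QQ)
    hence "int n dvd (k - j)" by (rule Z)
    thus ?thesis using Q_pair gk by simp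
  qed
qed

lemma L3C: assumes "Q j \<in> H"
  shows "centralizer G H \<subseteq> {P 0, P (int n), Q j, Q (j + int n)}"
proof
  fix g assume g: "g \<in> centralizer G H"
  hence gc: "g \<in> carrier G" and d: "g \<otimes> Q j = Q j \<otimes> g"
    using assms unfolding centralizer_def by auto
  show "g \<in> {P 0, P (int n), Q j, Q (j + int n)}"
  proof (rule carrier_cases[OF gc])
    fix k assume gk: "g = P k"
    hence "int n dvd k" using d comm_PQ by metis
    thus ?thesis using P_Z gk by simp
  next
    fix k assume gk: "g = Q k"
    hence "int n dvd (k - j)" using d comm_QQ by metis
    thus ?thesis using Q_pair gk by simp
  qed
qed

lemma LZ: assumes "H \<subseteq> range P" and Z: "\<And>k. P k \<in> H \<Longrightarrow> int n dvd k"
  shows "H \<subseteq> {P 0, P (int n)}"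
  using assms P_Z by blast

lemma Z_central: "centralizer G {P 0, P (int n)} = carrier G"
proof
  show "carrier G \<subseteq> centralizer G {P 0, P (int n)}"
  proof
    fix g assume gc: "g \<in> carrier G"
    have "g \<otimes> P (int n) = P (int n) \<otimes> g"
    proof (rule carrier_cases[OF gc])
      fix k assume "g = Q k" thus ?thesis using comm_PQ[of "int n" k] by simp
    qed (simp add: comm_PP)
    thus "g \<in> centralizer G {P 0, P (int n)}" unfolding centralizer_def using gc by (auto simp: P0)
  qed
qed (rule cent_sub)

lemma cent_A: assumes "n \<ge> 2" shows "centralizer G (range P) = range P"
proof
  have "\<not> int n dvd 1" using assms by simp
  thus "centralizer G (range P) \<subseteq> range P" by (intro L1[of 1]) auto
  show "range P \<subseteq> centralizer G (range P)" unfolding centralizer_def by (auto simp: comm_PP)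
qed

lemma card_le4: "card {p, q, r, s} \<le> 4" using card_length[of "[p, q, r, s]"] by simp
lemma card_le2: "card {p, q} \<le> 2" using card_length[of "[p, q]"] by simp
lemma card_le4': "H \<subseteq> {p, q, r, s} \<Longrightarrow> card H \<le> 4"
  using card_mono[of "{p, q, r, s}" H] card_le4[of p q r s] by simp
lemma card_le2': "H \<subseteq> {p, q} \<Longrightarrow> card H \<le> 2"
  using card_mono[of "{p, q}" H] card_le2[of p q] by simp

lemma card_H: "subgroup H G \<Longrightarrow> card H \<le> 4 * n"
  using card_mono[OF fin subgroup.subset] crd by metis
lemma card_C: "card (centralizer G H) \<le> 4 * n"
  using card_mono[OF fin cent_sub] crd by metis


lemma finA: "finite (range P)" using fin by (rule finite_subset[rotated]) auto

lemma big_bound: assumes n3: "n \<ge> 3" and H: "subgroup H G"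
  shows "cd_measure G H \<le> 4 * n * n \<and> (cd_measure G H = 4 * n * n \<longrightarrow> H = range P)"
proof -
  have Hc: "H \<subseteq> carrier G" using subgroup.subset[OF H] .
  have hH: "card H \<le> 4 * n" using card_H[OF H] .
  have hC: "card (centralizer G H) \<le> 4 * n" using card_C .
  have m: "cd_measure G H = card H * card (centralizer G H)" unfolding cd_measure_def ..
  have "8 * n < 4 * n * n" using n3 by simp
  have "16 < 4 * n * n" using n3 mult_le_mono[OF n3 n3] by simp
  show ?thesis
  proof (cases "H \<subseteq> range P")
    case True
    show ?thesis
    proof (cases "\<exists>i. P i \<in> H \<and> \<not> int n dvd i")
      case True
      then obtain i where i: "P i \<in> H" "\<not> int n dvd i" by auto
      have c1: "card (centralizer G H) \<le> 2 * n"
        using card_mono[OF finA L1[OF i]] card_A by simp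
      have c2: "card H \<le> 2 * n" using card_mono[OF finA \<open>H \<subseteq> range P\<close>] card_A by simp
      have le: "cd_measure G H \<le> 4 * n * n" using m mult_le_mono[OF c2 c1] by simp
      moreover have "cd_measure G H = 4 * n * n \<longrightarrow> H = range P"
      proof
        assume eq: "cd_measure G H = 4 * n * n"
        have "card H = 2 * n"
        proof (rule ccontr)
          assume "card H \<noteq> 2 * n"
          hence "card H < 2 * n" using c2 by simp
          have "card H * card (centralizer G H) \<le> card H * (2 * n)" by (rule mult_le_mono2[OF c1])
          moreover have "card H * (2 * n) < 2 * n * (2 * n)"
            by (rule mult_strict_right_mono[OF \<open>card H < 2 * n\<close>]) (use n3 in simp)
          ultimately have "card H * card (centralizer G H) < 2 * n * (2 * n)" by (rule le_less_trans)
          moreover have "2 * n * (2 * n) = 4 * n * n" by simp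
          ultimately show False using eq m by linarith
        qed
        thus "H = range P" using card_subset_eq[OF finA \<open>H \<subseteq> range P\<close>] card_A by simp
      qed
      ultimately show ?thesis by simp
    next
      case False
      hence "H \<subseteq> {P 0, P (int n)}" using LZ[OF \<open>H \<subseteq> range P\<close>] by blast
      hence "card H \<le> 2" by (rule card_le2')
      hence "card H * card (centralizer G H) \<le> 2 * (4 * n)" using hC by (rule mult_le_mono)
      hence "cd_measure G H \<le> 2 * (4 * n)" using m by simp
      hence "cd_measure G H < 4 * n * n" using \<open>8 * n < 4 * n * n\<close> by linarith
      thus ?thesis by simp
    qed
  next
    case False
    then obtain g where "g \<in> H" "g \<notin> range P" by auto
    then obtain j where j: "Q j \<in> H" using Hc by (metis carrier_cases rangeI subsetD)
    show ?thesis
    proof (cases "\<exists>i. P i \<in> H \<and> \<not> int n dvd i")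
      case True
      then obtain i where i: "P i \<in> H" "\<not> int n dvd i" by auto
      have "card (centralizer G H) \<le> 2"
        using L2[OF i j] by (rule card_le2')
      hence "card H * card (centralizer G H) \<le> (4 * n) * 2" using hH by (intro mult_le_mono)
      hence "cd_measure G H \<le> (4 * n) * 2" using m by simp
      hence "cd_measure G H < 4 * n * n" using \<open>8 * n < 4 * n * n\<close> by linarith
      thus ?thesis by simp
    next
      case False
      hence "H \<subseteq> {P 0, P (int n), Q j, Q (j + int n)}" using L3H[OF H j] by blast
      hence c2: "card H \<le> 4" by (rule card_le4')
      have c1: "card (centralizer G H) \<le> 4"
        using L3C[OF j] by (rule card_le4')
      have "cd_measure G H \<le> 16" using m mult_le_mono[OF c2 c1] by simp
      hence "cd_measure G H < 4 * n * n" using \<open>16 < 4 * n * n\<close> by linarith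
      thus ?thesis by simp
    qed
  qed
qed

lemma mA: assumes "n \<ge> 2" shows "cd_measure G (range P) = 4 * n * n"
  unfolding cd_measure_def cent_A[OF assms] card_A by simp

lemma n1_cent: assumes "n = 1" "H \<subseteq> carrier G" shows "centralizer G H = carrier G"
proof
  show "carrier G \<subseteq> centralizer G H"
  proof
    fix g assume gc: "g \<in> carrier G"
    have "g \<otimes> h = h \<otimes> g" if "h \<in> H" for h
    proof -
      have hc: "h \<in> carrier G" using that assms by auto
      show ?thesis
        apply (rule carrier_cases[OF gc]; rule carrier_cases[OF hc])
        by (simp_all add: comm_PP comm_PQ comm_QQ assms(1)) (metis comm_PQ assms(1) one_dvd of_nat_1)
    qed
    thus "g \<in> centralizer G H" unfolding centralizer_def using gc by auto
  qed
qed (rule cent_sub)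

lemma comm_QP: "Q j \<otimes> P i = P i \<otimes> Q j \<longleftrightarrow> int n dvd i" by (metis comm_PQ)

end

lemma cd_max_eq:
  assumes "finite (carrier G)" "\<And>H. subgroup H G \<Longrightarrow> cd_measure G H \<le> M"
    "subgroup K G" "cd_measure G K = M"
  shows "cd_max G = M"
proof -
  have "{cd_measure G H | H. subgroup H G} \<subseteq> cd_measure G ` Pow (carrier G)"
    using subgroup.subset by blast
  hence "finite {cd_measure G H | H. subgroup H G}" using assms(1) finite_surj by blast
  thus ?thesis unfolding cd_max_def using assms by (intro Max_eqI) auto
qed


context dic begin
context assumes n2: "n = 2"
begin

lemma Peq2: "P i = P j \<longleftrightarrow> i mod 4 = j mod 4" using P_eq n2 by simp
lemma Qeq2: "Q i = Q j \<longleftrightarrow> i mod 4 = j mod 4" using Q_eq n2 by simp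

lemma mod4: "(i::int) mod 4 = 0 \<or> i mod 4 = 1 \<or> i mod 4 = 2 \<or> i mod 4 = 3" by arith

lemma A4: "range P = {P 0, P 1, P 2, P 3}"
proof -
  have "P i \<in> {P 0, P 1, P 2, P 3}" for i
    using mod4[of i] Peq2[of i] by auto
  thus ?thesis by auto
qed

lemma carr8: "carrier G = {P 0, P 1, P 2, P 3, Q 0, Q 1, Q 2, Q 3}"
proof -
  have "P i \<in> {P 0, P 1, P 2, P 3}" for i
    using mod4[of i] Peq2[of i] by auto
  moreover have "Q i \<in> {Q 0, Q 1, Q 2, Q 3}" for i
    using mod4[of i] Qeq2[of i] by auto
  ultimately show ?thesis unfolding carrier_S S_def by auto
qed

lemma red2: "P 4 = P 0" "P 5 = P 1" "P 6 = P 2" "P 7 = P 3" "P (-1) = P 3" "P (-2) = P 2" "P (-3) = P 1"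
  "Q 4 = Q 0" "Q 5 = Q 1" "Q 6 = Q 2" "Q 7 = Q 3" "Q (-1) = Q 3" "Q (-2) = Q 2" "Q (-3) = Q 1"
  by (simp_all add: Peq2 Qeq2)

lemmas ops2 = PP PQ QP QQ P_inv Q_inv Peq2 Qeq2 n2 red2

lemma nontriv: assumes H: "subgroup H G" shows "H = {\<one>} \<or> P 2 \<in> H"
proof (rule disjCI)
  assume "P 2 \<notin> H"
  have "g = \<one>" if g: "g \<in> H" for g
  proof -
    have sq: "g \<otimes> g \<in> H" using g H by (simp add: subgroup.m_closed)
    have "g \<in> carrier G" using g subgroup.subset[OF H] by auto
    hence "g \<in> {P 0, P 1, P 2, P 3, Q 0, Q 1, Q 2, Q 3}" using carr8 by simp
    hence "g = P 0 \<or> g = P 2 \<or> g \<otimes> g = P 2" by (auto simp: PP QQ n2 red2)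
    thus ?thesis using sq g \<open>P 2 \<notin> H\<close> by (auto simp: P0)
  qed
  thus "H = {\<one>}" using subgroup.one_closed[OF H] by blast
qed

definition "Z2 = {P 0, P 2}"
definition "A2 = {P 0, P 1, P 2, P 3}"
definition "B0 = {P 0, P 2, Q 0, Q 2}"
definition "B1 = {P 0, P 2, Q 1, Q 3}"

lemma classify: assumes H: "subgroup H G" and p2: "P 2 \<in> H"
  shows "H = Z2 \<or> H = A2 \<or> H = B0 \<or> H = B1 \<or> H = carrier G"
proof -
  have mc: "h \<otimes> k \<in> H" if "h \<in> H" "k \<in> H" for h k using that H by (simp add: subgroup.m_closed)
  have p0: "P 0 \<in> H" using subgroup.one_closed[OF H] by (simp add: P0)
  have sub: "H \<subseteq> {P 0, P 1, P 2, P 3, Q 0, Q 1, Q 2, Q 3}" using subgroup.subset[OF H] carr8 by simp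
  have t: "P 1 \<otimes> P 2 = P 3" "P 3 \<otimes> P 2 = P 1" "P 2 \<otimes> Q 0 = Q 2" "P 2 \<otimes> Q 2 = Q 0"
    "P 2 \<otimes> Q 1 = Q 3" "P 2 \<otimes> Q 3 = Q 1" "Q 0 \<otimes> Q 1 = P 1" "P 1 \<otimes> Q 0 = Q 1" "P 1 \<otimes> Q 1 = Q 2"
    by (simp_all add: PP PQ QQ n2 red2)
  have e1: "P 1 \<in> H \<longleftrightarrow> P 3 \<in> H" using mc[OF _ p2, of "P 1"] mc[OF _ p2, of "P 3"] unfolding t by blast
  have e2: "Q 0 \<in> H \<longleftrightarrow> Q 2 \<in> H" using mc[OF p2, of "Q 0"] mc[OF p2, of "Q 2"] unfolding t by blast
  have e3: "Q 1 \<in> H \<longleftrightarrow> Q 3 \<in> H" using mc[OF p2, of "Q 1"] mc[OF p2, of "Q 3"] unfolding t by blast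
  have i1: "Q 0 \<in> H \<Longrightarrow> Q 1 \<in> H \<Longrightarrow> P 1 \<in> H" using mc[of "Q 0" "Q 1"] unfolding t by blast
  have i2: "P 1 \<in> H \<Longrightarrow> Q 0 \<in> H \<Longrightarrow> Q 1 \<in> H" using mc[of "P 1" "Q 0"] unfolding t by blast
  have i3: "P 1 \<in> H \<Longrightarrow> Q 1 \<in> H \<Longrightarrow> Q 0 \<in> H" using mc[of "P 1" "Q 1"] e2 unfolding t by blast
  have fi: "{g \<in> insert c B. g \<in> H} = (if c \<in> H then insert c {g \<in> B. g \<in> H} else {g \<in> B. g \<in> H})"
    for c B by auto
  have fe: "{g \<in> {}. g \<in> H} = {}" by simp
  define XX where "XX = {g \<in> {P 0, P 1, P 2, P 3, Q 0, Q 1, Q 2, Q 3}. g \<in> H}"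
  have HH: "H = XX" using sub unfolding XX_def by blast
  have "XX = {P 0, P 2} \<or> XX = {P 0, P 1, P 2, P 3} \<or> XX = {P 0, P 2, Q 0, Q 2} \<or> XX = {P 0, P 2, Q 1, Q 3}
     \<or> XX = {P 0, P 1, P 2, P 3, Q 0, Q 1, Q 2, Q 3}"
    unfolding XX_def
  proof (cases "P 1 \<in> H"; cases "Q 0 \<in> H"; cases "Q 1 \<in> H")
  qed (use i1 i2 i3 in \<open>simp_all only: fi p0 p2 e1[symmetric] e2[symmetric] e3[symmetric] if_True if_False
      fe simp_thms\<close>)
  thus ?thesis unfolding Z2_def A2_def B0_def B1_def carr8 HH by simp
qed


lemma sub_Z2: "subgroup Z2 G"
  by (rule subgroupI) (auto simp: Z2_def PP P_inv Peq2 n2)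
lemma sub_B0: "subgroup B0 G"
  by (rule subgroupI) (auto simp: B0_def PP PQ QP QQ P_inv Q_inv Peq2 Qeq2 n2)
lemma sub_B1: "subgroup B1 G"
  by (rule subgroupI) (auto simp: B1_def PP PQ QP QQ P_inv Q_inv Peq2 Qeq2 n2)
lemma sub_A2: "subgroup A2 G" using A_sub A4 by (simp add: A2_def)

lemma C_Z2: "centralizer G Z2 = carrier G" using Z_central n2 by (simp add: Z2_def)
lemma C_A2: "centralizer G A2 = A2" using cent_A n2 A4 by (simp add: A2_def)
lemma C_car: "centralizer G (carrier G) = Z2"
proof
  have "\<not> int n dvd 1" using n2 by simp
  from L2[of 1 "carrier G" 0, OF _ this] show "centralizer G (carrier G) \<subseteq> Z2"
    using n2 by (simp add: Z2_def)
  show "Z2 \<subseteq> centralizer G (carrier G)"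
  proof
    fix h assume h: "h \<in> Z2"
    hence "h \<in> carrier G" by (auto simp: Z2_def)
    moreover have "h \<otimes> g = g \<otimes> h" if g: "g \<in> carrier G" for g
    proof -
      have "g \<in> centralizer G Z2" using C_Z2 g by simp
      thus ?thesis using h unfolding centralizer_def by auto
    qed
    ultimately show "h \<in> centralizer G (carrier G)" unfolding centralizer_def by auto
  qed
qed
lemma C_B0: "centralizer G B0 = B0"
proof
  show "centralizer G B0 \<subseteq> B0" using L3C[of 0 B0] n2 by (simp add: B0_def)
  show "B0 \<subseteq> centralizer G B0" unfolding centralizer_def B0_def
    by (auto simp: PP PQ QP QQ Peq2 Qeq2 n2)
qed
lemma C_B1: "centralizer G B1 = B1"
proof
  show "centralizer G B1 \<subseteq> B1" using L3C[of 1 B1] n2 by (simp add: B1_def)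
  show "B1 \<subseteq> centralizer G B1" unfolding centralizer_def B1_def
    by (auto simp: PP PQ QP QQ Peq2 Qeq2 n2)
qed
lemma C_1: "centralizer G {\<one>} = carrier G" unfolding centralizer_def by auto

lemma cards2: "card Z2 = 2" "card A2 = 4" "card B0 = 4" "card B1 = 4" "card (carrier G) = 8"
  using crd n2 by (simp_all add: Z2_def A2_def B0_def B1_def Peq2 Qeq2)

lemma P2_ne1: "P 2 \<noteq> \<one>" using Peq2[of 2 0] by (simp add: P0)

lemma meas2: assumes H: "subgroup H G"
  shows "cd_measure G H = (if P 2 \<in> H then 16 else 8)"
proof (cases "P 2 \<in> H")
  case True
  from classify[OF H True] have "H = Z2 \<or> H = A2 \<or> H = B0 \<or> H = B1 \<or> H = carrier G" .
  thus ?thesis using True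
    by (elim disjE) (simp_all add: cd_measure_def C_Z2 C_A2 C_B0 C_B1 C_car cards2)
next
  case False
  hence "H = {\<one>}" using nontriv[OF H] by simp
  thus ?thesis using False cards2 by (simp add: cd_measure_def C_1)
qed

lemma P2_in: "P 2 \<in> Z2" "P 2 \<in> A2" "P 2 \<in> B0" "P 2 \<in> B1" "P 2 \<in> carrier G"
  by (simp_all add: Z2_def A2_def B0_def B1_def)

lemma cdmax2: "cd_max G = 16"
  by (rule cd_max_eq[OF fin _ subgroup_self]) (simp_all add: meas2 subgroup_self P2_in)

lemma CD2: "CD_lattice G = {H. subgroup H G \<and> P 2 \<in> H}"
  unfolding CD_lattice_def cdmax2 by (auto simp: meas2 split: if_splits)

lemma CD2': "CD_lattice G = {Z2, carrier G, A2, B0, B1}"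
  unfolding CD2 using classify sub_Z2 sub_A2 sub_B0 sub_B1 subgroup_self P2_in by blast

lemma center2: "group_center G = Z2" unfolding group_center_def by (rule C_car)

lemma CD2_center: "CD_lattice G = {H. subgroup H G \<and> group_center G \<subseteq> H}"
proof -
  have "group_center G \<subseteq> H \<longleftrightarrow> P 2 \<in> H" if "subgroup H G" for H
    using subgroup.one_closed[OF that] unfolding center2 Z2_def by (auto simp: P0)
  thus ?thesis unfolding CD2 by blast
qed

lemma qa2: "quasi_antichain (CD_lattice G) 3"
proof -
  have m: "P 1 \<in> A2" "P 1 \<notin> Z2" "P 1 \<notin> B0" "P 1 \<notin> B1" "Q 0 \<in> B0" "Q 0 \<notin> A2" "Q 0 \<notin> B1" "Q 0 \<notin> Z2"
    "Q 1 \<in> B1" "Q 1 \<notin> A2" "Q 1 \<notin> B0" "Q 1 \<notin> Z2" "P 1 \<in> carrier G" "Q 0 \<in> carrier G"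
    by (simp_all add: Z2_def A2_def B0_def B1_def Peq2 Qeq2)
  have f1: "CD_lattice G = {Z2, carrier G} \<union> {A2, B0, B1}" unfolding CD2' by auto
  have f2: "Z2 \<noteq> carrier G" using m by blast
  have f3: "Z2 \<notin> {A2, B0, B1}" using m by blast
  have f4: "carrier G \<notin> {A2, B0, B1}" using m by blast
  have f5: "finite {A2, B0, B1}" by simp
  have "A2 \<noteq> B0" "A2 \<noteq> B1" "B0 \<noteq> B1" using m by blast+
  hence f6: "card {A2, B0, B1} = 3" by simp
  have f7: "\<forall>S\<in>CD_lattice G. Z2 \<subseteq> S \<and> S \<subseteq> carrier G"
    unfolding f1 by (simp add: Z2_def A2_def B0_def B1_def)
  have f8: "\<forall>S\<in>{A2, B0, B1}. \<forall>T\<in>{A2, B0, B1}. S \<subseteq> T \<longrightarrow> S = T"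
    using m by blast
  show ?thesis unfolding quasi_antichain_def
    apply (rule exI[where x=Z2], rule exI[where x="carrier G"], rule exI[where x="{A2, B0, B1}"])
    using f1 f2 f3 f4 f5 f6 f7 f8 by (intro conjI) assumption+
qed

end
end


theorem corollary3p2:
  fixes G (structure) and a x :: 'a and n :: nat
  assumes "group G" and "n \<ge> 1"
    and "a \<in> carrier G" and "x \<in> carrier G"
    and "generate G {a, x} = carrier G"
    and "a [^] (2 * n) = \<one>"
    and "x [^] (2::nat) = a [^] n"
    and "inv x \<otimes> a \<otimes> x = inv a"
    and "finite (carrier G)" and "card (carrier G) = 4 * n"
  shows "(n \<noteq> 2 \<longrightarrow> chain_length_zero (CD_lattice G)
            \<and> (n = 1 \<longrightarrow> CD_lattice G = {carrier G})
            \<and> (n \<ge> 3 \<longrightarrow> CD_lattice G = {generate G {a}}))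
       \<and> (n = 2 \<longrightarrow> quasi_antichain (CD_lattice G) 3
            \<and> CD_lattice G = {H. subgroup H G \<and> group_center G \<subseteq> H})"
proof -
  interpret d: dic G a x n
    by (intro dic.intro dic_axioms.intro) (use assms in auto)
  have c1: "CD_lattice G = {carrier G}" if n1: "n = 1"
  proof -
    have m: "cd_measure G H = card H * 4" if "subgroup H G" for H
      using d.n1_cent[OF n1 subgroup.subset[OF that]] assms(10) n1 by (simp add: cd_measure_def)
    have le: "cd_measure G H \<le> 16" if "subgroup H G" for H
      using m[OF that] d.card_H[OF that] n1 by simp
    have mx: "cd_max G = 16"
      using cd_max_eq[OF assms(9) le d.subgroup_self] m[OF d.subgroup_self] assms(10) n1 by simp
    have "H = carrier G" if "subgroup H G" "cd_measure G H = 16" for H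
    proof -
      have "card H = card (carrier G)" using that m assms(10) n1 by simp
      thus ?thesis using card_subset_eq[OF assms(9) subgroup.subset[OF that(1)]] by simp
    qed
    moreover have "cd_measure G (carrier G) = 16" using m[OF d.subgroup_self] assms(10) n1 by simp
    ultimately show ?thesis unfolding CD_lattice_def mx using d.subgroup_self by blast
  qed
  have c3: "CD_lattice G = {generate G {a}}" if n3: "n \<ge> 3"
  proof -
    have mx: "cd_max G = 4 * n * n"
      using cd_max_eq[OF assms(9) _ d.A_sub d.mA] d.big_bound[OF n3] n3 by simp
    have "cd_measure G (range d.P) = 4 * n * n" using d.mA n3 by simp
    thus ?thesis unfolding CD_lattice_def mx d.A_gen
      using d.big_bound[OF n3] d.A_sub by blast
  qed
  have c2: "quasi_antichain (CD_lattice G) 3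
            \<and> CD_lattice G = {H. subgroup H G \<and> group_center G \<subseteq> H}" if n2: "n = 2"
    using d.qa2[OF n2] d.CD2_center[OF n2] by simp
  have ch: "chain_length_zero (CD_lattice G)" if "n \<noteq> 2"
  proof -
    have "n = 1 \<or> n \<ge> 3" using assms(2) that by auto
    hence "\<exists>S. CD_lattice G = {S}" using c1 c3 by blast
    thus ?thesis unfolding chain_length_zero_def by auto
  qed
  show ?thesis using ch c1 c2 c3 by blast
qed

end
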